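(* Let $(\zeta_i)_{i\in\mathbb{Z}}$ be i.i.d. $\mathbb{Z}^2$-valued random vectors, realized as coordinates on $(\Omega,\mathbb{P})=((\mathbb{Z}^2)^{\mathbb{Z}},\text{product measure})$ with shift $\theta$, centered, aperiodic (support generates $\mathbb{Z}^2$), with finite second moment and nonsingular covariance; let $Z_0=\underline0$, $Z_n=\zeta_0+\dots+\zeta_{n-1}$. For intervals $I,J\subset\mathbb{N}$ and $\underline p\in\mathbb{Z}^2$ let $V(\omega,I,J,\underline p)=\#\{(u,v)\in I\times J: Z_u(\omega)-Z_v(\omega)=\underline p\}$ and $V(\omega,I,\underline p)=V(\omega,I,I,\underline p)$. Let $C_0>0$ be the constant such that $\mathbb{E}\,\#\{0\le u,v<n:Z_u=Z_v\}\sim C_0 n\ln n$. Then there is a set $\hat\Omega\subset\Omega$ with $\mathbb{P}(\hat\Omega)=1$ such that for all $\omega\in\hat\Omega$, all $\underline p\in\mathbb{Z}^2$ and all $A\in\,]0,1[$, with $B=1-A$ (and $nA$ standing for $\lfloor nA\rfloor$): $$\lim_n\frac{V(\omega,[nA,n],\underline p)}{C_0\,nB\ln n}=1,$$ and $$V(\omega,[1,nA],[nA,n],\underline p)+V(\omega,[nA,n],[1,nA],\underline p)=\varepsilon_n(\omega)\,n\log n\quad\text{with }\varepsilon_n(\omega)\to0.$$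
   Context: It is known (and used as input) that for a.e. $\omega$, $V(\omega,[1,n],\underline p)/(C_0n\ln n)\to1$ for every $\underline p\in\mathbb{Z}^2$, and $\#\{0\le u,v<n:Z_u(\omega)=Z_v(\omega)\}/(C_0n\ln n)\to1$. *)

theory Defs
  imports "HOL-Probability.Probability" "HOL-Library.Product_Plus" "HOL-Library.Landau_Symbols"
begin

inductive_set int_group_gen :: "(int \<times> int) set \<Rightarrow> (int \<times> int) set" for S where
  gen_zero: "(0, 0) \<in> int_group_gen S"
| gen_base: "x \<in> S \<Longrightarrow> x \<in> int_group_gen S"
| gen_add: "x \<in> int_group_gen S \<Longrightarrow> y \<in> int_group_gen S \<Longrightarrow> x + y \<in> int_group_gen S"
| gen_neg: "x \<in> int_group_gen S \<Longrightarrow> - x \<in> int_group_gen S"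

definition walk_space :: "(int \<times> int) pmf \<Rightarrow> (int \<Rightarrow> int \<times> int) measure" where
  "walk_space \<mu> = PiM UNIV (\<lambda>_::int. measure_pmf \<mu>)"

definition Zw :: "(int \<Rightarrow> int \<times> int) \<Rightarrow> nat \<Rightarrow> int \<times> int" where
  "Zw \<omega> n = (\<Sum>i<n. \<omega> (int i))"

definition Vw :: "(int \<Rightarrow> int \<times> int) \<Rightarrow> nat set \<Rightarrow> nat set \<Rightarrow> int \<times> int \<Rightarrow> nat" where
  "Vw \<omega> I J p = card {(u, v). u \<in> I \<and> v \<in> J \<and> Zw \<omega> u - Zw \<omega> v = p}"

definition self_int :: "(int \<Rightarrow> int \<times> int) \<Rightarrow> nat \<Rightarrow> nat" where
  "self_int \<omega> n = card {(u, v). u < n \<and> v < n \<and> Zw \<omega> u = Zw \<omega> v}"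

end

theory Submission
  imports Defs "HOL-Real_Asymp.Real_Asymp"
begin


lemma Zw_diff:
  assumes "v \<le> u"
  shows "Zw \<omega> u - Zw \<omega> v = (\<Sum>i\<in>{v..<u}. \<omega> (int i))"
proof -
  have "{..<u} = {..<v} \<union> {v..<u}" using assms by auto
  then have "Zw \<omega> u = Zw \<omega> v + (\<Sum>i\<in>{v..<u}. \<omega> (int i))"
    unfolding Zw_def by (simp add: sum.union_disjoint ivl_disj_int)
  then show ?thesis by simp
qed

lemma Zw_diff_local:
  assumes "\<And>i. a \<le> i \<Longrightarrow> i < b \<Longrightarrow> \<omega> (int i) = \<omega>' (int i)"
    and "a \<le> u" "u \<le> b" "a \<le> v" "v \<le> b"
  shows "Zw \<omega> u - Zw \<omega> v = Zw \<omega>' u - Zw \<omega>' v"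
proof -
  have e: "Zw \<omega> x - Zw \<omega> a = Zw \<omega>' x - Zw \<omega>' a" if "a \<le> x" "x \<le> b" for x
    using that assms(1) by (simp add: Zw_diff)
  have "Zw \<omega> u - Zw \<omega> v = (Zw \<omega> u - Zw \<omega> a) - (Zw \<omega> v - Zw \<omega> a)" by simp
  also have "\<dots> = (Zw \<omega>' u - Zw \<omega>' a) - (Zw \<omega>' v - Zw \<omega>' a)" using e assms by simp
  finally show ?thesis by simp
qed

lemma Vw_local:
  assumes "\<And>i. a \<le> i \<Longrightarrow> i < b \<Longrightarrow> \<omega> (int i) = \<omega>' (int i)"
    and "I \<subseteq> {a..b}" "J \<subseteq> {a..b}"
  shows "Vw \<omega> I J p = Vw \<omega>' I J p"
proof -
  have "{(u, v). u \<in> I \<and> v \<in> J \<and> Zw \<omega> u - Zw \<omega> v = p} = {(u, v). u \<in> I \<and> v \<in> J \<and> Zw \<omega>' u - Zw \<omega>' v = p}"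
    using Zw_diff_local[of a b \<omega> \<omega>'] assms by (auto 0 4 simp: subset_iff)
  then show ?thesis unfolding Vw_def by simp
qed

definition sh :: "nat \<Rightarrow> (int \<Rightarrow> int \<times> int) \<Rightarrow> (int \<Rightarrow> int \<times> int)" where
  "sh c \<omega> = (\<lambda>i. \<omega> (i + int c))"

lemma Zw_sh: "Zw (sh c \<omega>) u = Zw \<omega> (u + c) - Zw \<omega> c"
proof -
  have "Zw (sh c \<omega>) u = (\<Sum>i<u. \<omega> (int (i + c)))" unfolding Zw_def sh_def by simp
  also have "\<dots> = (\<Sum>i\<in>{c..<u+c}. \<omega> (int i))"
    by (rule sum.reindex_bij_witness[of _ "\<lambda>i. i - c" "\<lambda>i. i + c"]) auto
  also have "\<dots> = Zw \<omega> (u + c) - Zw \<omega> c" by (simp add: Zw_diff)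
  finally show ?thesis .
qed

lemma Vw_sh: "Vw (sh c \<omega>) I J p = Vw \<omega> ((\<lambda>x. x + c) ` I) ((\<lambda>x. x + c) ` J) p"
proof -
  have "{(u, v). u \<in> (\<lambda>x. x + c) ` I \<and> v \<in> (\<lambda>x. x + c) ` J \<and> Zw \<omega> u - Zw \<omega> v = p}
     = (\<lambda>(u,v). (u + c, v + c)) ` {(u, v). u \<in> I \<and> v \<in> J \<and> Zw (sh c \<omega>) u - Zw (sh c \<omega>) v = p}"
    by (auto simp: Zw_sh image_iff)
  moreover have "inj (\<lambda>(u,v). (u + c, v + (c::nat)))" by (auto simp: inj_def)
  ultimately show ?thesis unfolding Vw_def by (simp add: card_image inj_on_subset[of _ UNIV])
qed

lemma Vw_sh_block: "Vw (sh c \<omega>) {1..L} {1..L} p = Vw \<omega> {c+1..c+L} {c+1..c+L} p"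
proof -
  have "(\<lambda>x. x + c) ` {1..L} = {c+1..c+L}"
    by (auto simp: image_iff intro!: bexI[where x="_ - c"])
  then show ?thesis using Vw_sh[of c \<omega> "{1..L}" "{1..L}" p] by (simp add: add.commute)
qed

lemma Vw_set: "Vw \<omega> I J p = card (Set.filter (\<lambda>(u,v). Zw \<omega> u - Zw \<omega> v = p) (I \<times> J))"
  unfolding Vw_def by (rule arg_cong[where f=card]) auto

lemma Vw_mono:
  assumes "I \<subseteq> I'" "J \<subseteq> J'" "finite I'" "finite J'"
  shows "Vw \<omega> I J p \<le> Vw \<omega> I' J' p"
  unfolding Vw_set using assms by (intro card_mono) (auto )

lemma Vw_Un1:
  assumes "I \<inter> I' = {}" "finite I" "finite I'" "finite J"
  shows "Vw \<omega> (I \<union> I') J p = Vw \<omega> I J p + Vw \<omega> I' J p"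
proof -
  have "Set.filter (\<lambda>(u,v). Zw \<omega> u - Zw \<omega> v = p) ((I \<union> I') \<times> J) =
        Set.filter (\<lambda>(u,v). Zw \<omega> u - Zw \<omega> v = p) (I \<times> J) \<union> Set.filter (\<lambda>(u,v). Zw \<omega> u - Zw \<omega> v = p) (I' \<times> J)"
    by auto
  then show ?thesis unfolding Vw_set using assms
    by (simp add: card_Un_disjoint disjoint_iff)
qed

lemma Vw_Un2:
  assumes "J \<inter> J' = {}" "finite I" "finite J" "finite J'"
  shows "Vw \<omega> I (J \<union> J') p = Vw \<omega> I J p + Vw \<omega> I J' p"
proof -
  have "Set.filter (\<lambda>(u,v). Zw \<omega> u - Zw \<omega> v = p) (I \<times> (J \<union> J')) =
        Set.filter (\<lambda>(u,v). Zw \<omega> u - Zw \<omega> v = p) (I \<times> J) \<union> Set.filter (\<lambda>(u,v). Zw \<omega> u - Zw \<omega> v = p) (I \<times> J')"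
    by auto
  then show ?thesis unfolding Vw_set using assms
    by (simp add: card_Un_disjoint disjoint_iff)
qed

lemma Vw_single_le: "finite J \<Longrightarrow> Vw \<omega> {x} J p \<le> card J"
proof -
  assume J: "finite J"
  have "Vw \<omega> {x} J p \<le> card ({x} \<times> J)" unfolding Vw_set using J
    by (intro card_mono) auto
  then show ?thesis by (simp add: card_cartesian_product)
qed

lemma Vw_blocks:
  assumes "finite Q" "\<And>j. j \<in> S \<Longrightarrow> B j \<subseteq> Q" "disjoint_family_on B S" "finite S"
  shows "(\<Sum>j\<in>S. Vw \<omega> (B j) (B j) p) \<le> Vw \<omega> Q Q p"
proof -
  let ?F = "\<lambda>X. Set.filter (\<lambda>(u,v). Zw \<omega> u - Zw \<omega> v = p) X"
  have fin: "finite (B j)" if "j \<in> S" for j using assms(1,2) that finite_subset by blast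
  have "(\<Sum>j\<in>S. Vw \<omega> (B j) (B j) p) = card (\<Union>j\<in>S. ?F (B j \<times> B j))"
    unfolding Vw_set
  proof (rule card_UN_disjoint[symmetric])
    show "finite S" by fact
    show "\<forall>i\<in>S. finite (?F (B i \<times> B i))" using fin by auto
    show "\<forall>i\<in>S. \<forall>j\<in>S. i \<noteq> j \<longrightarrow> ?F (B i \<times> B i) \<inter> ?F (B j \<times> B j) = {}"
      using assms(3) unfolding disjoint_family_on_def by auto
  qed
  also have "\<dots> \<le> card (?F (Q \<times> Q))"
    using assms by (intro card_mono) auto
  finally show ?thesis unfolding Vw_set .
qed

lemma meas_coord:
  "(\<lambda>\<omega>. \<omega> i) \<in> measurable (PiM I (\<lambda>_. measure_pmf \<mu>)) (count_space UNIV)"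
proof (cases "i \<in> I")
  case True
  then show ?thesis
    using measurable_component_singleton[OF True, of "\<lambda>_. measure_pmf \<mu>"]
    by (simp add: measurable_cong_sets)
next
  case False
  have "(\<lambda>\<omega>. undefined) \<in> measurable (PiM I (\<lambda>_. measure_pmf \<mu>)) (count_space UNIV)" by simp
  then show ?thesis
    by (rule measurable_cong[THEN iffD1, rotated]) (use False in \<open>auto simp: space_PiM PiE_def extensional_def\<close>)
qed

lemma meas_add_cs:
  fixes f g :: "'a \<Rightarrow> 'b :: {countable, plus}"
  assumes "f \<in> measurable M (count_space UNIV)" "g \<in> measurable M (count_space UNIV)"
  shows "(\<lambda>x. f x + g x) \<in> measurable M (count_space UNIV)"
proof -
  have "(\<lambda>x. (\<lambda>a x. a + g x) (f x) x) \<in> measurable M (count_space UNIV)"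
  proof (rule measurable_compose_countable[OF _ assms(1)])
    fix a
    show "(\<lambda>x. a + g x) \<in> measurable M (count_space UNIV)"
      using measurable_compose_countable[of "\<lambda>b x. a + b" M "count_space UNIV", OF _ assms(2)] by simp
  qed
  then show ?thesis by simp
qed

lemma meas_diff_cs:
  fixes f g :: "'a \<Rightarrow> 'b :: {countable, minus}"
  assumes "f \<in> measurable M (count_space UNIV)" "g \<in> measurable M (count_space UNIV)"
  shows "(\<lambda>x. f x - g x) \<in> measurable M (count_space UNIV)"
proof -
  have "(\<lambda>x. (\<lambda>a x. a - g x) (f x) x) \<in> measurable M (count_space UNIV)"
  proof (rule measurable_compose_countable[OF _ assms(1)])
    fix a
    show "(\<lambda>x. a - g x) \<in> measurable M (count_space UNIV)"
      using measurable_compose_countable[of "\<lambda>b x. a - b" M "count_space UNIV", OF _ assms(2)] by simp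
  qed
  then show ?thesis by simp
qed

lemma meas_Zw: "(\<lambda>\<omega>. Zw \<omega> u) \<in> measurable (PiM I (\<lambda>_. measure_pmf \<mu>)) (count_space UNIV)"
proof (induction u)
  case 0
  then show ?case by (simp add: Zw_def)
next
  case (Suc u)
  have "(\<lambda>\<omega>. Zw \<omega> u + \<omega> (int u)) \<in> measurable (PiM I (\<lambda>_. measure_pmf \<mu>)) (count_space UNIV)"
    by (rule meas_add_cs[OF Suc meas_coord])
  then show ?case by (simp add: Zw_def)
qed

lemma meas_Vw:
  assumes "finite I" "finite J"
  shows "(\<lambda>\<omega>. real (Vw \<omega> I J p)) \<in> borel_measurable (PiM K (\<lambda>_. measure_pmf \<mu>))"
proof -
  have eq: "real (Vw \<omega> I J p) = (\<Sum>x\<in>I \<times> J. if Zw \<omega> (fst x) - Zw \<omega> (snd x) = p then 1 else 0)" for \<omega>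
    unfolding Vw_set using assms
    by (simp add: sum.If_cases case_prod_beta Int_def)
  have m: "(\<lambda>\<omega>. Zw \<omega> (fst x) - Zw \<omega> (snd x)) \<in> measurable (PiM K (\<lambda>_. measure_pmf \<mu>)) (count_space UNIV)" for x
    by (intro meas_diff_cs meas_Zw)
  have S: "{\<omega> \<in> space (PiM K (\<lambda>_. measure_pmf \<mu>)). Zw \<omega> (fst x) - Zw \<omega> (snd x) = p} \<in> sets (PiM K (\<lambda>_. measure_pmf \<mu>))" for x
    using measurable_sets[OF m[of x], of "{p}"] by (simp add: vimage_def Int_def conj_commute)
  show ?thesis unfolding eq
    by (intro borel_measurable_sum measurable_If S) auto
qed



lemma ws_prob: "prob_space (walk_space \<mu>)"
  unfolding walk_space_def by (intro prob_space_PiM prob_space_measure_pmf)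

lemma ws_space: "space (walk_space \<mu>) = UNIV"
  unfolding walk_space_def by (simp add: space_PiM)

lemma ws_sets: "sets (walk_space \<mu>) = sets (PiM UNIV (\<lambda>_::int. measure_pmf \<mu>))"
  unfolding walk_space_def by simp

lemma sh_meas: "sh c \<in> measurable (walk_space \<mu>) (walk_space \<mu>)"
proof -
  have "(\<lambda>\<omega>. \<lambda>i\<in>UNIV. \<omega> (i + int c)) \<in> measurable (PiM UNIV (\<lambda>_::int. measure_pmf \<mu>)) (PiM UNIV (\<lambda>_::int. measure_pmf \<mu>))"
    by (intro measurable_restrict measurable_component_singleton) auto
  then show ?thesis unfolding walk_space_def sh_def by (simp add: restrict_UNIV)
qed

lemma distr_sh: "distr (walk_space \<mu>) (walk_space \<mu>) (sh c) = walk_space \<mu>"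
proof -
  have "distr (PiM UNIV (\<lambda>_::int. measure_pmf \<mu>)) (PiM UNIV (\<lambda>i. (\<lambda>_::int. measure_pmf \<mu>) (i + int c)))
          (\<lambda>\<omega>. \<lambda>n\<in>UNIV. \<omega> (n + int c)) = PiM UNIV (\<lambda>i. (\<lambda>_::int. measure_pmf \<mu>) (i + int c))"
    by (rule distr_PiM_reindex) (auto intro: prob_space_measure_pmf inj_onI)
  then show ?thesis unfolding walk_space_def sh_def by (simp add: restrict_UNIV)
qed

lemma coord_indep: "prob_space.indep_vars (walk_space \<mu>) (\<lambda>_. measure_pmf \<mu>) (\<lambda>i \<omega>. \<omega> i) UNIV"
proof -
  interpret P: prob_space "walk_space \<mu>" by (rule ws_prob)
  have rv: "(\<lambda>\<omega>. \<omega> i) \<in> measurable (walk_space \<mu>) (measure_pmf \<mu>)" for i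
    unfolding walk_space_def using meas_coord by simp
  have "distr (walk_space \<mu>) (PiM UNIV (\<lambda>_. measure_pmf \<mu>)) (\<lambda>x. \<lambda>i\<in>UNIV. x i)
        = PiM UNIV (\<lambda>i. distr (walk_space \<mu>) (measure_pmf \<mu>) (\<lambda>x. x i))"
  proof -
    have 1: "distr (walk_space \<mu>) (PiM UNIV (\<lambda>_. measure_pmf \<mu>)) (\<lambda>x. \<lambda>i\<in>UNIV. x i) = walk_space \<mu>"
      unfolding walk_space_def restrict_UNIV by (simp add: distr_id[unfolded id_def])
    have 2: "distr (walk_space \<mu>) (measure_pmf \<mu>) (\<lambda>x. x i) = measure_pmf \<mu>" for i
      unfolding walk_space_def by (rule distr_PiM_component) (auto intro: prob_space_measure_pmf)
    show ?thesis by (simp only: 1 2) (simp add: walk_space_def)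
  qed
  then show ?thesis
    by (subst P.indep_vars_iff_distr_eq_PiM') (use rv in auto)
qed

definition Yf :: "real \<Rightarrow> int \<times> int \<Rightarrow> nat \<Rightarrow> (int \<Rightarrow> int \<times> int) \<Rightarrow> real" where
  "Yf C0 p L \<omega> = min 1 (real (Vw \<omega> {1..L} {1..L} p) / (C0 * real L * ln (real L)))"

lemma Yf_meas: "Yf C0 p L \<in> borel_measurable (PiM K (\<lambda>_. measure_pmf \<mu>))"
  unfolding Yf_def[abs_def] by (intro borel_measurable_min borel_measurable_const borel_measurable_divide meas_Vw) auto

lemma Yf_meas_ws: "Yf C0 p L \<in> borel_measurable (walk_space \<mu>)"
  unfolding walk_space_def by (rule Yf_meas)

lemma ln_nat_nonneg: "ln (real (L::nat)) \<ge> 0"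
  by (cases "L = 0") auto

lemma Yf_range: "C0 > 0 \<Longrightarrow> 0 \<le> Yf C0 p L \<omega> \<and> Yf C0 p L \<omega> \<le> 1"
  using ln_nat_nonneg[of L] unfolding Yf_def by (auto intro!: divide_nonneg_pos divide_nonneg_nonneg mult_nonneg_nonneg)

lemma distr_Yf_sh:
  "distr (walk_space \<mu>) borel (\<lambda>\<omega>. Yf C0 p L (sh c \<omega>)) = distr (walk_space \<mu>) borel (Yf C0 p L)"
proof -
  have "distr (walk_space \<mu>) borel (Yf C0 p L \<circ> sh c) = distr (distr (walk_space \<mu>) (walk_space \<mu>) (sh c)) borel (Yf C0 p L)"
    by (rule distr_distr[symmetric]) (intro Yf_meas_ws sh_meas)+
  then show ?thesis by (simp add: distr_sh comp_def)
qed

lemma Yf_sh_local: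
  "Yf C0 p L (sh s \<omega>) = Yf C0 p L (sh s (restrict \<omega> (int ` {s..<s+L})))"
proof -
  have "Vw \<omega> {s+1..s+L} {s+1..s+L} p = Vw (restrict \<omega> (int ` {s..<s+L})) {s+1..s+L} {s+1..s+L} p"
    by (rule Vw_local[of s "s+L"]) auto
  then show ?thesis unfolding Yf_def Vw_sh_block by simp
qed

lemma blocks_indep:
  "prob_space.indep_vars (walk_space \<mu>) (\<lambda>_. borel) (\<lambda>j \<omega>. Yf C0 p L (sh (a + j*L) \<omega>)) {..<K}"
proof -
  interpret P: prob_space "walk_space \<mu>" by (rule ws_prob)
  define KK where "KK j = int ` {a + j*L..<a + j*L+L}" for j
  have disj: "disjoint_family_on KK {..<K}"
    unfolding disjoint_family_on_def
  proof (intro ballI impI)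
    fix j j' :: nat assume "j \<noteq> j'"
    show "KK j \<inter> KK j' = {}"
    proof (rule ccontr)
      assume "KK j \<inter> KK j' \<noteq> {}"
      then obtain x where x: "a + j*L \<le> x" "x < a + j*L + L" "a + j'*L \<le> x" "x < a + j'*L + L"
        unfolding KK_def by auto
      show False
      proof (cases "j < j'")
        case True
        then have "(j+1)*L \<le> j'*L" by (intro mult_le_mono1) simp
        then show False using x by simp
      next
        case False
        then have "(j'+1)*L \<le> j*L" using \<open>j \<noteq> j'\<close> by (intro mult_le_mono1) simp
        then show False using x by simp
      qed
    qed
  qed
  have ind1: "P.indep_vars (\<lambda>j. PiM (KK j) (\<lambda>_. measure_pmf \<mu>)) (\<lambda>j \<omega>. restrict (\<lambda>i. \<omega> i) (KK j)) {..<K}"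
    by (rule P.indep_vars_restrict[OF coord_indep _ disj]) auto
  have ind2: "P.indep_vars (\<lambda>_. borel) (\<lambda>j \<omega>. (\<lambda>j r. Yf C0 p L (sh (a + j*L) r)) j (restrict (\<lambda>i. \<omega> i) (KK j))) {..<K}"
  proof (rule P.indep_vars_compose2[OF ind1])
    fix j
    have "(\<lambda>r. Yf C0 p L (sh (a + j*L) r)) \<in> borel_measurable (PiM (KK j) (\<lambda>_. measure_pmf \<mu>))"
      unfolding Yf_def Vw_sh_block by (intro borel_measurable_min borel_measurable_const borel_measurable_divide meas_Vw) auto
    then show "(\<lambda>r. Yf C0 p L (sh (a + j*L) r)) \<in> measurable (PiM (KK j) (\<lambda>_. measure_pmf \<mu>)) borel" by simp
  qed
  show ?thesis
    using ind2 by (subst P.indep_vars_cong[OF refl _ refl]) (auto simp: KK_def Yf_sh_local[symmetric])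
qed

lemma hoeffding_blocks:
  assumes "C0 > 0" "K > 0" "\<epsilon> \<ge> 0"
  shows "measure (walk_space \<nu>) {\<omega> \<in> space (walk_space \<nu>).
            (\<Sum>j<K. Yf C0 p L (sh (a + j*L) \<omega>)) / real K \<le> prob_space.expectation (walk_space \<nu>) (Yf C0 p L) - \<epsilon>}
         \<le> exp (- 2 * real K * \<epsilon>\<^sup>2)"
proof -
  interpret P: prob_space "walk_space \<nu>" by (rule ws_prob)
  interpret H: Hoeffding_ineq_iid "walk_space \<nu>" "{..<K}" "\<lambda>j \<omega>. Yf C0 p L (sh (a + j*L) \<omega>)" "Yf C0 p L" 0 1 "P.expectation (Yf C0 p L)"
  proof unfold_locales
    show "finite {..<K}" by simp
    show "P.indep_vars (\<lambda>_. borel) (\<lambda>j \<omega>. Yf C0 p L (sh (a + j * L) \<omega>)) {..<K}" by (rule blocks_indep)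
    show "\<And>i. i \<in> {..<K} \<Longrightarrow> distr (walk_space \<nu>) borel (\<lambda>\<omega>. Yf C0 p L (sh (a + i * L) \<omega>)) = distr (walk_space \<nu>) borel (Yf C0 p L)"
      by (rule distr_Yf_sh)
    show "P.random_variable borel (Yf C0 p L)" using Yf_meas_ws[of C0 p L \<nu>] by simp
    show "AE x in walk_space \<nu>. Yf C0 p L x \<in> {0..1}" using Yf_range[OF assms(1)] by auto
  qed (rule reflexive)
  have "P.prob {x \<in> space (walk_space \<nu>). (\<Sum>i\<in>{..<K}. Yf C0 p L (sh (a + i*L) x)) / real (card {..<K}) \<le> P.expectation (Yf C0 p L) - \<epsilon>}
     \<le> exp (- 2 * real (card {..<K}) * \<epsilon>\<^sup>2 / (1 - 0)\<^sup>2)"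
    by (rule H.Hoeffding_ineq_le') (use assms in auto)
  then show ?thesis by simp
qed



definition mA :: "real \<Rightarrow> nat \<Rightarrow> nat" where "mA A n = nat \<lfloor>real n * A\<rfloor>"
definition KK :: "nat \<Rightarrow> nat" where "KK n = (nat \<lfloor>ln (real n)\<rfloor>)\<^sup>2 + 1"
definition LL :: "real \<Rightarrow> nat \<Rightarrow> nat" where "LL A n = (n - mA A n) div KK n"

lemma nat_floor_le: "0 \<le> x \<Longrightarrow> real (nat \<lfloor>x\<rfloor>) \<le> x"
  by (subst of_nat_nat) auto

lemma nat_floor_gt: "real (nat \<lfloor>x\<rfloor>) > x - 1"
proof (cases "0 \<le> \<lfloor>x\<rfloor>")
  case True
  then have "real (nat \<lfloor>x\<rfloor>) = real_of_int \<lfloor>x\<rfloor>" by simp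
  then show ?thesis using real_of_int_floor_gt_diff_one[of x] by linarith
next
  case False
  then have "x < 0" by linarith
  then show ?thesis by simp
qed

lemma mA_le: "A \<ge> 0 \<Longrightarrow> real (mA A n) \<le> real n * A"
  unfolding mA_def by (rule nat_floor_le) simp

lemma mA_ge: "real (mA A n) > real n * A - 1"
  unfolding mA_def by (rule nat_floor_gt)

lemma mA_le_n: "0 \<le> A \<Longrightarrow> A \<le> 1 \<Longrightarrow> mA A n \<le> n"
proof -
  assume "0 \<le> A" "A \<le> 1"
  then have "real n * A \<le> real n" by (simp add: mult_left_le)
  then have "real (mA A n) \<le> real n" using mA_le[of A n] \<open>0 \<le> A\<close> by simp
  then show ?thesis by simp
qed

lemma mA_mono: "A \<le> A' \<Longrightarrow> mA A n \<le> mA A' n"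
  unfolding mA_def by (intro nat_mono floor_mono mult_left_mono) auto

lemma KK_pos: "KK n > 0" unfolding KK_def by simp

lemma KK_le: "real (KK n) \<le> (ln (real n))\<^sup>2 + 1"
proof -
  have l: "ln (real n) \<ge> 0" by (rule ln_nat_nonneg)
  have "real (nat \<lfloor>ln (real n)\<rfloor>) \<le> ln (real n)" using l by (rule nat_floor_le)
  moreover have "0 \<le> real (nat \<lfloor>ln (real n)\<rfloor>)" by simp
  ultimately have "(real (nat \<lfloor>ln (real n)\<rfloor>))\<^sup>2 \<le> (ln (real n))\<^sup>2" by (intro power_mono) auto
  then show ?thesis unfolding KK_def by simp
qed

lemma KK_ge: "real (KK n) \<ge> (ln (real n) - 1)\<^sup>2"
proof (cases "ln (real n) \<ge> 1")
  case True
  have "ln (real n) - 1 \<le> real (nat \<lfloor>ln (real n)\<rfloor>)"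
    using nat_floor_gt[of "ln (real n)"] by simp
  then have "(ln (real n) - 1)\<^sup>2 \<le> (real (nat \<lfloor>ln (real n)\<rfloor>))\<^sup>2" using True by (intro power_mono) auto
  then show ?thesis unfolding KK_def by simp
next
  case False
  have "\<bar>ln (real n) - 1\<bar> \<le> 1" using False ln_nat_nonneg[of n] by simp
  then have "\<bar>ln (real n) - 1\<bar>\<^sup>2 \<le> 1" by (intro power_le_one) auto
  then have h: "(ln (real n) - 1)\<^sup>2 \<le> 1" by (simp only: power2_abs)
  have h2: "0 \<le> (real (nat \<lfloor>ln (real n)\<rfloor>))\<^sup>2" by simp
  have h3: "real (KK n) = 1 + (real (nat \<lfloor>ln (real n)\<rfloor>))\<^sup>2" unfolding KK_def by simp
  show ?thesis using h h2 h3 by linarith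
qed

lemma nm_ge: fixes A :: real and n :: nat shows "0 \<le> A \<Longrightarrow> A \<le> 1 \<Longrightarrow> real (n - mA A n) \<ge> (1 - A) * real n"
  using mA_le[of A n] mA_le_n[of A n] by (simp add: of_nat_diff algebra_simps)

lemma KL_ge: "real (KK n) * real (LL A n) \<ge> real (n - mA A n) - real (KK n)"
proof -
  let ?x = "n - mA A n" and ?K = "KK n"
  have "?x = ?K * (?x div ?K) + ?x mod ?K" by simp
  moreover have "?x mod ?K < ?K" using KK_pos by simp
  ultimately have "real ?x \<le> real ?K * real (?x div ?K) + real ?K"
    by (metis (no_types, lifting) add_le_mono less_or_eq_imp_le of_nat_add of_nat_le_iff of_nat_mult order_refl)
  then show ?thesis unfolding LL_def by simp
qed

lemma KL_le: "KK n * LL A n \<le> n - mA A n"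
  unfolding LL_def by (simp add: mult.commute div_times_less_eq_dividend)

lemma L_ge: "real (LL A n) \<ge> real (n - mA A n) / real (KK n) - 1"
proof -
  have "real (KK n) * real (LL A n) \<ge> real (n - mA A n) - real (KK n)" by (rule KL_ge)
  then have "real (LL A n) \<ge> (real (n - mA A n) - real (KK n)) / real (KK n)"
    using KK_pos[of n] by (simp add: divide_le_eq mult.commute)
  then show ?thesis using KK_pos[of n] by (simp add: diff_divide_distrib)
qed

lemma L_ge2: fixes A :: real and n :: nat shows "0 \<le> A \<Longrightarrow> A \<le> 1 \<Longrightarrow> real (LL A n) \<ge> (1 - A) * real n / ((ln (real n))\<^sup>2 + 1) - 1"
proof -
  assume A: "0 \<le> A" "A \<le> 1"
  have "(1 - A) * real n / ((ln (real n))\<^sup>2 + 1) \<le> real (n - mA A n) / real (KK n)"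
    using nm_ge[of A n] A KK_le[of n] KK_pos[of n] A
    by (intro frac_le) auto
  then show ?thesis using L_ge[where A=A and n=n] by simp
qed

lemma LL_tendsto: "0 \<le> A \<Longrightarrow> A < 1 \<Longrightarrow> filterlim (LL A) at_top sequentially"
proof -
  assume A: "0 \<le> A" "A < 1"
  have "filterlim (\<lambda>n::nat. (1 - A) * real n / ((ln (real n))\<^sup>2 + 1) - 1) at_top sequentially"
    using A by real_asymp
  then have "filterlim (\<lambda>n. real (LL A n)) at_top sequentially"
    by (rule filterlim_at_top_mono) (use L_ge2 A in auto)
  then show ?thesis using filterlim_real_sequentially
    by (simp add: filterlim_sequentially_iff_filterlim_real)
qed

lemma KLlnL_asym:
  assumes A: "0 < A" "A < 1" and e: "e > 0"
  shows "eventually (\<lambda>n. real (KK n) * real (LL A n) * ln (real (LL A n)) \<ge> (1 - e) * ((1 - A) * real n * ln (real n))) sequentially"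
proof -
  define g where "g n = ((1 - A) * real n - (ln (real n))\<^sup>2 - 1) * ln ((1 - A) * real n / ((ln (real n))\<^sup>2 + 1) - 1)" for n :: nat
  have lim: "(\<lambda>n. g n / ((1 - A) * real n * ln (real n))) \<longlonglongrightarrow> 1"
    unfolding g_def using A by real_asymp
  have ev1: "eventually (\<lambda>n. g n / ((1 - A) * real n * ln (real n)) > 1 - e) sequentially"
    using lim e by (intro order_tendstoD) auto
  have ev2: "eventually (\<lambda>n::nat. (1 - A) * real n / ((ln (real n))\<^sup>2 + 1) - 1 \<ge> 1) sequentially"
    using A by real_asymp
  have ev3: "eventually (\<lambda>n::nat. (1 - A) * real n - (ln (real n))\<^sup>2 - 1 \<ge> 0) sequentially"
    using A by real_asymp
  have ev4: "eventually (\<lambda>n::nat. n \<ge> 2) sequentially" by (rule eventually_ge_at_top)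
  show ?thesis using ev1 ev2 ev3 ev4
  proof eventually_elim
    case (elim n)
    have pos: "(1 - A) * real n * ln (real n) > 0" using elim A by (intro mult_pos_pos) auto
    have "g n > (1 - e) * ((1 - A) * real n * ln (real n))" using elim(1) pos by (simp add: less_divide_eq)
    moreover have "g n \<le> real (KK n) * real (LL A n) * ln (real (LL A n))"
    proof -
      have "(1 - A) * real n - (ln (real n))\<^sup>2 - 1 \<le> real (KK n) * real (LL A n)"
        using KL_ge[where A=A and n=n] nm_ge[of A n] KK_le[of n] A by simp
      moreover have "ln ((1 - A) * real n / ((ln (real n))\<^sup>2 + 1) - 1) \<le> ln (real (LL A n))"
        using L_ge2[where A=A and n=n] A elim(2) by (subst ln_le_cancel_iff) auto
      moreover have "0 \<le> ln ((1 - A) * real n / ((ln (real n))\<^sup>2 + 1) - 1)" using elim(2) by simp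
      ultimately show ?thesis unfolding g_def using elim(3) by (intro mult_mono) auto
    qed
    ultimately show ?case by simp
  qed
qed

lemma E_Yf_lim:
  assumes C0: "C0 > 0"
    and inp: "AE \<omega> in walk_space \<mu>. (\<lambda>n. real (Vw \<omega> {1..n} {1..n} p) / (C0 * real n * ln (real n))) \<longlonglongrightarrow> 1"
  shows "(\<lambda>L. prob_space.expectation (walk_space \<mu>) (Yf C0 p L)) \<longlonglongrightarrow> 1"
proof -
  interpret P: prob_space "walk_space \<mu>" by (rule ws_prob)
  have "(\<lambda>L. P.expectation (Yf C0 p L)) \<longlonglongrightarrow> P.expectation (\<lambda>_. 1)"
  proof (rule integral_dominated_convergence[where w="\<lambda>_. 1"])
    show "(\<lambda>_. 1::real) \<in> borel_measurable (walk_space \<mu>)" by simp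
    show "\<And>i. Yf C0 p i \<in> borel_measurable (walk_space \<mu>)" by (rule Yf_meas_ws)
    show "integrable (walk_space \<mu>) (\<lambda>_. 1::real)" by simp
    show "AE x in walk_space \<mu>. (\<lambda>i. Yf C0 p i x) \<longlonglongrightarrow> 1"
      using inp
    proof eventually_elim
      case (elim x)
      have "(\<lambda>i. min 1 (real (Vw x {1..i} {1..i} p) / (C0 * real i * ln (real i)))) \<longlonglongrightarrow> min 1 1"
        by (intro tendsto_min tendsto_const elim)
      then show ?case unfolding Yf_def by simp
    qed
    show "\<And>i. AE x in walk_space \<mu>. norm (Yf C0 p i x) \<le> 1"
      using Yf_range[OF C0] by auto
  qed
  then show ?thesis by (simp add: P.prob_space)
qed



lemma blocks_disj: fixes a L :: nat shows "disjoint_family_on (\<lambda>j. {a + j*L + 1..a + j*L + L}) S"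
  unfolding disjoint_family_on_def
proof (intro ballI impI)
  fix j j' :: nat assume "j \<noteq> j'"
  show "{a + j*L + 1..a + j*L + L} \<inter> {a + j'*L + 1..a + j'*L + L} = {}"
  proof (rule ccontr)
    assume "{a + j*L + 1..a + j*L + L} \<inter> {a + j'*L + 1..a + j'*L + L} \<noteq> {}"
    then obtain x where "x \<in> {a + j*L + 1..a + j*L + L} \<inter> {a + j'*L + 1..a + j'*L + L}"
      by blast
    then have x: "a + j*L + 1 \<le> x" "x \<le> a + j*L + L" "a + j'*L + 1 \<le> x" "x \<le> a + j'*L + L"
      by auto
    show False
    proof (cases "j < j'")
      case True
      then have "(j+1)*L \<le> j'*L" by (intro mult_le_mono1) simp
      then show False using x by simp
    next
      case False
      then have "(j'+1)*L \<le> j*L" using \<open>j \<noteq> j'\<close> by (intro mult_le_mono1) simp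
      then show False using x by simp
    qed
  qed
qed

lemma lower0:
  assumes C0: "C0 > 0"
    and inp: "AE \<omega> in walk_space \<mu>. (\<lambda>n. real (Vw \<omega> {1..n} {1..n} p) / (C0 * real n * ln (real n))) \<longlonglongrightarrow> 1"
    and A: "0 < A" "A < 1" and e: "\<epsilon> > 0"
  shows "AE \<omega> in walk_space \<mu>. eventually (\<lambda>n. real (Vw \<omega> {mA A n + 1..n} {mA A n + 1..n} p)
            \<ge> (1 - 2*\<epsilon>) * (C0 * (real (KK n) * real (LL A n) * ln (real (LL A n))))) sequentially"
proof -
  interpret P: prob_space "walk_space \<mu>" by (rule ws_prob)
  define E where "E L = P.expectation (Yf C0 p L)" for L
  define S where "S n \<omega> = (\<Sum>j<KK n. Yf C0 p (LL A n) (sh (mA A n + j * LL A n) \<omega>))" for n \<omega>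
  define B where "B n = {\<omega> \<in> space (walk_space \<mu>). S n \<omega> / real (KK n) \<le> E (LL A n) - \<epsilon>}" for n
  have Smeas: "S n \<in> borel_measurable (walk_space \<mu>)" for n
    unfolding S_def[abs_def]
    by (intro borel_measurable_sum measurable_compose[OF sh_meas Yf_meas_ws])
  have Bmeas: "B n \<in> sets (walk_space \<mu>)" for n
    unfolding B_def by (intro borel_measurable_le borel_measurable_divide Smeas borel_measurable_const)
  have Bbound: "measure (walk_space \<mu>) (B n) \<le> exp (- 2 * (ln (real n) - 1)\<^sup>2 * \<epsilon>\<^sup>2)" for n
  proof -
    have "measure (walk_space \<mu>) (B n) \<le> exp (- 2 * real (KK n) * \<epsilon>\<^sup>2)"
      unfolding B_def S_def E_def using hoeffding_blocks[OF C0 KK_pos, of \<epsilon> \<mu> p "LL A n" "mA A n"] e by simp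
    also have "\<dots> \<le> exp (- 2 * (ln (real n) - 1)\<^sup>2 * \<epsilon>\<^sup>2)"
      using KK_ge[of n] e by (simp add: mult_right_mono)
    finally show ?thesis .
  qed
  have summ: "summable (\<lambda>n. exp (- 2 * (ln (real n) - 1)\<^sup>2 * \<epsilon>\<^sup>2))"
  proof (rule summable_comparison_test_ev)
    have "eventually (\<lambda>n. exp (- 2 * (ln (real n) - 1)\<^sup>2 * \<epsilon>\<^sup>2) \<le> inverse (real n ^ 2)) sequentially"
      using e by real_asymp
    then show "eventually (\<lambda>n. norm (exp (- 2 * (ln (real n) - 1)\<^sup>2 * \<epsilon>\<^sup>2)) \<le> inverse (real n ^ 2)) sequentially"
      by simp
    show "summable (\<lambda>n. inverse (real n ^ 2))" by (rule inverse_power_summable) simp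
  qed
  have summB: "summable (\<lambda>n. measure (walk_space \<mu>) (B n))"
    by (rule summable_comparison_test[OF _ summ]) (use Bbound in auto)
  have BC: "AE \<omega> in walk_space \<mu>. eventually (\<lambda>n. \<omega> \<in> space (walk_space \<mu>) - B n) sequentially"
    by (rule borel_cantelli_AE1[OF Bmeas _ summB]) (simp add: P.emeasure_finite less_top[symmetric])
  have LLt: "filterlim (LL A) at_top sequentially" using LL_tendsto[of A] A by simp
  have "(\<lambda>n. E (LL A n)) \<longlonglongrightarrow> 1"
    unfolding E_def by (rule filterlim_compose[OF E_Yf_lim[OF C0 inp] LLt])
  then have evE: "eventually (\<lambda>n. E (LL A n) > 1 - \<epsilon>) sequentially"
    using e by (intro order_tendstoD) auto
  have evL: "eventually (\<lambda>n. LL A n \<ge> 2) sequentially"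
    using LLt unfolding filterlim_at_top by blast
  show ?thesis using BC
  proof eventually_elim
    case (elim \<omega>)
    show ?case using elim evE evL
    proof eventually_elim
      case (elim n)
      define L where "L = LL A n"
      define K where "K = KK n"
      define m where "m = mA A n"
      have Kpos: "real K > 0" unfolding K_def using KK_pos by simp
      have "\<not> (S n \<omega> / real K \<le> E L - \<epsilon>)" using elim(1) unfolding B_def K_def L_def by auto
      then have "S n \<omega> / real K > 1 - 2 * \<epsilon>" using elim(2) unfolding L_def by simp
      then have SK: "S n \<omega> \<ge> real K * (1 - 2 * \<epsilon>)" using Kpos by (simp add: less_divide_eq mult.commute)
      have L2: "real L \<ge> 2" using elim(3) unfolding L_def by simp
      define c where "c = C0 * real L * ln (real L)"
      have cpos: "c > 0" unfolding c_def using C0 L2 by (intro mult_pos_pos) auto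
      have blk: "c * Yf C0 p L (sh (m + j * L) \<omega>) \<le> real (Vw \<omega> {m + j*L + 1..m + j*L + L} {m + j*L + 1..m + j*L + L} p)" for j
      proof -
        have "Yf C0 p L (sh (m + j * L) \<omega>) \<le> real (Vw \<omega> {m + j*L + 1..m + j*L + L} {m + j*L + 1..m + j*L + L} p) / c"
          unfolding Yf_def Vw_sh_block c_def by simp
        then show ?thesis using cpos by (simp add: le_divide_eq mult.commute)
      qed
      have mn: "m \<le> n" unfolding m_def using A by (intro mA_le_n) auto
      have KL: "K * L \<le> n - m" unfolding K_def L_def m_def by (rule KL_le)
      have sub: "{m + j*L + 1..m + j*L + L} \<subseteq> {m + 1..n}" if "j \<in> {..<K}" for j
      proof -
        have "(j+1) * L \<le> K * L" using that by (intro mult_le_mono1) simp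
        then show ?thesis using KL mn by auto
      qed
      have "(\<Sum>j<K. Vw \<omega> {m + j*L + 1..m + j*L + L} {m + j*L + 1..m + j*L + L} p) \<le> Vw \<omega> {m + 1..n} {m + 1..n} p"
        by (rule Vw_blocks[OF _ sub blocks_disj]) auto
      then have "real (\<Sum>j<K. Vw \<omega> {m + j*L + 1..m + j*L + L} {m + j*L + 1..m + j*L + L} p) \<le> real (Vw \<omega> {m + 1..n} {m + 1..n} p)"
        by (simp only: of_nat_le_iff)
      then have "real (Vw \<omega> {m + 1..n} {m + 1..n} p) \<ge> (\<Sum>j<K. real (Vw \<omega> {m + j*L + 1..m + j*L + L} {m + j*L + 1..m + j*L + L} p))"
        by (simp only: of_nat_sum)
      also have "(\<Sum>j<K. real (Vw \<omega> {m + j*L + 1..m + j*L + L} {m + j*L + 1..m + j*L + L} p)) \<ge> (\<Sum>j<K. c * Yf C0 p L (sh (m + j * L) \<omega>))"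
        by (intro sum_mono blk)
      also have "(\<Sum>j<K. c * Yf C0 p L (sh (m + j * L) \<omega>)) = c * S n \<omega>"
        unfolding S_def K_def L_def m_def by (simp add: sum_distrib_left)
      also have "c * S n \<omega> \<ge> c * (real K * (1 - 2 * \<epsilon>))" using SK cpos by (intro mult_left_mono) auto
      finally have "real (Vw \<omega> {m + 1..n} {m + 1..n} p) \<ge> c * (real K * (1 - 2 * \<epsilon>))" .
      then show ?case unfolding c_def K_def L_def m_def by (simp add: algebra_simps)
    qed
  qed
qed

lemma lower:
  assumes C0: "C0 > 0"
    and inp: "AE \<omega> in walk_space \<mu>. (\<lambda>n. real (Vw \<omega> {1..n} {1..n} p) / (C0 * real n * ln (real n))) \<longlonglongrightarrow> 1"
    and A: "0 < A" "A < 1" and e: "e > 0" "e < 1"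
  shows "AE \<omega> in walk_space \<mu>. eventually (\<lambda>n. real (Vw \<omega> {mA A n + 1..n} {mA A n + 1..n} p)
            \<ge> (1 - e) * (C0 * ((1 - A) * real n * ln (real n)))) sequentially"
proof -
  have e4: "e/4 > 0" using e by simp
  show ?thesis
  using lower0[OF C0 inp A e4]
proof eventually_elim
  case (elim \<omega>)
  have e2: "e/2 > 0" using e by simp
  show ?case using elim(1) KLlnL_asym[OF A e2]
  proof eventually_elim
    case (elim n)
    define X where "X = real (KK n) * real (LL A n) * ln (real (LL A n))"
    define Y where "Y = (1 - A) * real n * ln (real n)"
    have Y0: "Y \<ge> 0" unfolding Y_def using A ln_nat_nonneg[of n] by simp
    have "real (Vw \<omega> {mA A n + 1..n} {mA A n + 1..n} p) \<ge> (1 - e/2) * (C0 * X)"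
      using elim(1) unfolding X_def by simp
    moreover have "(1 - e/2) * (C0 * X) \<ge> (1 - e/2) * (C0 * ((1 - e/2) * Y))"
      using elim(2) e C0 unfolding X_def Y_def by (intro mult_left_mono) auto
    moreover have "(1 - e/2) * (C0 * ((1 - e/2) * Y)) \<ge> (1 - e) * (C0 * Y)"
    proof -
      have "(1 - e/2) * (1 - e/2) \<ge> 1 - e" by (simp add: algebra_simps power2_eq_square)
      then have "(1 - e/2) * (1 - e/2) * (C0 * Y) \<ge> (1 - e) * (C0 * Y)"
        using C0 Y0 by (intro mult_right_mono) auto
      then show ?thesis by (simp add: algebra_simps)
    qed
    ultimately show ?case unfolding Y_def by linarith
  qed
qed
qed



lemma Vw_single_le2: "finite I \<Longrightarrow> Vw \<omega> I {x} p \<le> card I"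
proof -
  assume I: "finite I"
  have "Vw \<omega> I {x} p \<le> card (I \<times> {x})" unfolding Vw_set using I
    by (intro card_mono) auto
  then show ?thesis by (simp add: card_cartesian_product)
qed

lemma Vw_empty1 [simp]: "Vw \<omega> {} J p = 0" unfolding Vw_def by simp
lemma Vw_empty2 [simp]: "Vw \<omega> I {} p = 0" unfolding Vw_def by simp

lemma xlnx_mono: "1 \<le> x \<Longrightarrow> x \<le> y \<Longrightarrow> x * ln x \<le> y * ln (y::real)"
  by (intro mult_mono) auto

lemma lower_real:
  assumes C0: "C0 > 0" and A: "0 < A" "A < 1"
    and H2: "\<forall>q::rat. 0 < real_of_rat q \<and> real_of_rat q < 1 \<longrightarrow> (\<forall>k::nat.
        eventually (\<lambda>n. real (Vw \<omega> {mA (real_of_rat q) n + 1..n} {mA (real_of_rat q) n + 1..n} p)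
            \<ge> (1 - 1 / (real k + 2)) * (C0 * ((1 - real_of_rat q) * real n * ln (real n)))) sequentially)"
    and e: "e > 0" "e < 1"
  shows "eventually (\<lambda>n. real (Vw \<omega> {mA A n..n} {mA A n..n} p) \<ge> (1 - e) * (C0 * ((1 - A) * real n * ln (real n)))) sequentially"
proof -
  define \<delta> where "\<delta> = e * (1 - A) / 2"
  have \<delta>: "\<delta> > 0" unfolding \<delta>_def using e A by simp
  obtain r where r: "r \<in> \<rat>" "A < r" "r < min 1 (A + \<delta>)"
    using Rats_dense_in_real[of A "min 1 (A + \<delta>)"] A \<delta> by auto
  then obtain q where q: "r = real_of_rat q" by (auto elim: Rats_cases)
  obtain k :: nat where k: "2 / e < real k" using reals_Archimedean2 by blast
  have k2: "1 / (real k + 2) \<le> e / 2"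
    using k e by (simp add: field_simps)
  have ev: "eventually (\<lambda>n. real (Vw \<omega> {mA r n + 1..n} {mA r n + 1..n} p)
            \<ge> (1 - 1 / (real k + 2)) * (C0 * ((1 - r) * real n * ln (real n)))) sequentially"
  proof -
    have "0 < real_of_rat q" using r q A by linarith
    moreover have "real_of_rat q < 1" using r q by simp
    ultimately have qc: "0 < real_of_rat q \<and> real_of_rat q < 1" by blast
    show ?thesis using H2[rule_format, OF qc, of k] q by simp
  qed
  then show ?thesis
  proof eventually_elim
    case (elim n)
    have sub: "{mA r n + 1..n} \<subseteq> {mA A n..n}" using mA_mono[of A r n] r by auto
    have "Vw \<omega> {mA r n + 1..n} {mA r n + 1..n} p \<le> Vw \<omega> {mA A n..n} {mA A n..n} p"
      by (rule Vw_mono[OF sub sub]) auto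
    then have 1: "real (Vw \<omega> {mA A n..n} {mA A n..n} p) \<ge> (1 - 1 / (real k + 2)) * (C0 * ((1 - r) * real n * ln (real n)))"
      using elim by linarith
    define Z where "Z = C0 * (real n * ln (real n))"
    have Z0: "Z \<ge> 0" unfolding Z_def using C0 ln_nat_nonneg[of n] by simp
    have "(1 - 1 / (real k + 2)) * (C0 * ((1 - r) * real n * ln (real n))) = ((1 - 1 / (real k + 2)) * (1 - r)) * Z"
      unfolding Z_def by (simp only: mult_ac)
    also have "((1 - 1 / (real k + 2)) * (1 - r)) \<ge> (1 - e/2) * ((1 - A) * (1 - e/2))"
    proof (rule mult_mono)
      show "1 - e / 2 \<le> 1 - 1 / (real k + 2)" using k2 by simp
      show "(1 - A) * (1 - e / 2) \<le> 1 - r" using r unfolding \<delta>_def by (simp add: algebra_simps)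
      show "0 \<le> 1 - 1 / (real k + 2)" by simp
      show "0 \<le> (1 - A) * (1 - e / 2)" using A e by simp
    qed
    then have "((1 - 1 / (real k + 2)) * (1 - r)) * Z \<ge> (1 - e/2) * ((1 - A) * (1 - e/2)) * Z"
      using Z0 by (intro mult_right_mono) auto
    moreover have "(1 - e/2) * ((1 - A) * (1 - e/2)) * Z \<ge> (1 - e) * (1 - A) * Z"
    proof -
      have "(1 - e/2) * ((1 - A) * (1 - e/2)) = (1 - A) * ((1 - e/2) * (1 - e/2))" by simp
      also have "\<dots> \<ge> (1 - A) * (1 - e)"
        using A by (intro mult_left_mono) (auto simp: algebra_simps)
      finally show ?thesis using Z0 by (intro mult_right_mono) (auto simp: algebra_simps)
    qed
    ultimately have "(1 - 1 / (real k + 2)) * (C0 * ((1 - r) * real n * ln (real n))) \<ge> (1 - e) * (1 - A) * Z"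
      by linarith
    then show ?case using 1 unfolding Z_def by (simp add: algebra_simps)
  qed
qed



lemma Vw_decomp:
  assumes "1 \<le> m" "m \<le> n"
  shows "Vw \<omega> {1..n} {1..n} p = Vw \<omega> {1..<m} {1..<m} p + Vw \<omega> {m..n} {m..n} p
           + (Vw \<omega> {1..<m} {m..n} p + Vw \<omega> {m..n} {1..<m} p)"
proof -
  have U: "{1..n} = {1..<m} \<union> {m..n}" using assms by auto
  have D: "{1..<m} \<inter> {m..n} = {}" by auto
  have "Vw \<omega> ({1..<m} \<union> {m..n}) ({1..<m} \<union> {m..n}) p = Vw \<omega> {1..<m} ({1..<m} \<union> {m..n}) p + Vw \<omega> {m..n} ({1..<m} \<union> {m..n}) p"
    by (rule Vw_Un1[OF D]) auto
  also have "Vw \<omega> {1..<m} ({1..<m} \<union> {m..n}) p = Vw \<omega> {1..<m} {1..<m} p + Vw \<omega> {1..<m} {m..n} p"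
    by (rule Vw_Un2[OF D]) auto
  also have "Vw \<omega> {m..n} ({1..<m} \<union> {m..n}) p = Vw \<omega> {m..n} {1..<m} p + Vw \<omega> {m..n} {m..n} p"
    by (rule Vw_Un2[OF D]) auto
  finally show ?thesis unfolding U by simp
qed

lemma cross_bound:
  assumes "1 \<le> m" "m \<le> n"
  shows "Vw \<omega> {1..m} {m..n} p + Vw \<omega> {m..n} {1..m} p \<le> (Vw \<omega> {1..<m} {m..n} p + Vw \<omega> {m..n} {1..<m} p) + 2 * (n + 1)"
proof -
  have U: "{1..m} = {1..<m} \<union> {m}" using assms by auto
  have D: "{1..<m} \<inter> {m} = {}" by auto
  have c: "card {m..n} \<le> n + 1" by simp
  have "Vw \<omega> {1..m} {m..n} p = Vw \<omega> {1..<m} {m..n} p + Vw \<omega> {m} {m..n} p"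
    unfolding U by (rule Vw_Un1[OF D]) auto
  moreover have "Vw \<omega> {m..n} {1..m} p = Vw \<omega> {m..n} {1..<m} p + Vw \<omega> {m..n} {m} p"
    unfolding U by (rule Vw_Un2[OF D]) auto
  moreover have "Vw \<omega> {m} {m..n} p \<le> n + 1" using Vw_single_le[of "{m..n}" \<omega> m p] c by simp
  moreover have "Vw \<omega> {m..n} {m} p \<le> n + 1" using Vw_single_le2[of "{m..n}" \<omega> m p] c by simp
  ultimately show ?thesis by simp
qed

lemma det:
  assumes C0: "C0 > 0" and A: "0 < A" "A < 1"
    and H1: "(\<lambda>n. real (Vw \<omega> {1..n} {1..n} p) / (C0 * real n * ln (real n))) \<longlonglongrightarrow> 1"
    and H2: "\<forall>q::rat. 0 < real_of_rat q \<and> real_of_rat q < 1 \<longrightarrow> (\<forall>k::nat.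
        eventually (\<lambda>n. real (Vw \<omega> {mA (real_of_rat q) n + 1..n} {mA (real_of_rat q) n + 1..n} p)
            \<ge> (1 - 1 / (real k + 2)) * (C0 * ((1 - real_of_rat q) * real n * ln (real n)))) sequentially)"
  shows "(\<lambda>n. real (Vw \<omega> {mA A n..n} {mA A n..n} p) / (C0 * real n * (1 - A) * ln (real n))) \<longlonglongrightarrow> 1
    \<and> (\<exists>\<epsilon>::nat \<Rightarrow> real. \<epsilon> \<longlonglongrightarrow> 0 \<and> (\<forall>n. real (Vw \<omega> {1..mA A n} {mA A n..n} p + Vw \<omega> {mA A n..n} {1..mA A n} p)
          = \<epsilon> n * real n * ln (real n)))"
proof -
  define m where "m n = mA A n" for n
  define N where "N n = C0 * real n * ln (real n)" for n
  define a where "a n = real (Vw \<omega> {1..n} {1..n} p) / N n" for n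
  define b where "b n = real (Vw \<omega> {1..<m n} {1..<m n} p) / N n" for n
  define c where "c n = real (Vw \<omega> {m n..n} {m n..n} p) / N n" for n
  define x where "x n = real (Vw \<omega> {1..<m n} {m n..n} p + Vw \<omega> {m n..n} {1..<m n} p) / N n" for n
  have evn2: "eventually (\<lambda>n::nat. n \<ge> 2) sequentially" by (rule eventually_ge_at_top)
  have evN: "eventually (\<lambda>n. N n > 0) sequentially"
    using evn2 by eventually_elim (use C0 in \<open>auto simp: N_def intro!: mult_pos_pos\<close>)
  have evA3: "eventually (\<lambda>n::nat. real n * A - 2 \<ge> 2) sequentially" using A by real_asymp
  have evm: "eventually (\<lambda>n. 3 \<le> m n \<and> m n \<le> n) sequentially"
    using evA3
  proof eventually_elim
    case (elim n)
    have "real (m n) > 3" using mA_ge[of n A] elim unfolding m_def by linarith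
    then show ?case unfolding m_def using mA_le_n[of A n] A by auto
  qed
  have evdec: "eventually (\<lambda>n. a n = b n + c n + x n) sequentially"
    using evm evN
  proof eventually_elim
    case (elim n)
    have "real (Vw \<omega> {1..n} {1..n} p) = real (Vw \<omega> {1..<m n} {1..<m n} p) + real (Vw \<omega> {m n..n} {m n..n} p)
           + real (Vw \<omega> {1..<m n} {m n..n} p + Vw \<omega> {m n..n} {1..<m n} p)"
      using Vw_decomp[of "m n" n \<omega> p] elim by simp
    then show ?case unfolding a_def b_def c_def x_def by (simp add: add_divide_distrib)
  qed
  have x0: "x n \<ge> 0" if "N n > 0" for n unfolding x_def using that by simp
  have a1: "a \<longlonglongrightarrow> 1" using H1 unfolding a_def N_def .
  define m' where "m' n = m n - 1" for n
  have m'_ge: "real (m' n) \<ge> real n * A - 2" for n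
  proof (cases "m n \<ge> 1")
    case True then show ?thesis using mA_ge[of n A] unfolding m'_def m_def by (simp add: of_nat_diff)
  next
    case False then have "m n = 0" by simp
    then show ?thesis using mA_ge[of n A] unfolding m'_def m_def by simp
  qed
  have m'_le: "real (m' n) \<le> real n * A" for n
    using mA_le[of A n] A unfolding m'_def m_def by linarith
  have m'_lim: "filterlim m' at_top sequentially"
  proof -
    have "filterlim (\<lambda>n::nat. real n * A - 2) at_top sequentially" using A by real_asymp
    then have "filterlim (\<lambda>n. real (m' n)) at_top sequentially"
      by (rule filterlim_at_top_mono) (use m'_ge in auto)
    then show ?thesis by (simp add: filterlim_sequentially_iff_filterlim_real)
  qed
  have f1: "(\<lambda>n. real (Vw \<omega> {1..m' n} {1..m' n} p) / (C0 * real (m' n) * ln (real (m' n)))) \<longlonglongrightarrow> 1"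
    using filterlim_compose[OF H1 m'_lim] by simp
  have f2: "(\<lambda>n. real (m' n) * ln (real (m' n)) / (real n * ln (real n))) \<longlonglongrightarrow> A"
  proof (rule tendsto_sandwich)
    show "(\<lambda>n::nat. (real n * A - 2) * ln (real n * A - 2) / (real n * ln (real n))) \<longlonglongrightarrow> A"
      using A by real_asymp
    show "(\<lambda>n::nat. (real n * A) * ln (real n * A) / (real n * ln (real n))) \<longlonglongrightarrow> A"
      using A by real_asymp
    show "eventually (\<lambda>n. (real n * A - 2) * ln (real n * A - 2) / (real n * ln (real n))
            \<le> real (m' n) * ln (real (m' n)) / (real n * ln (real n))) sequentially"
      using evA3 evn2
    proof eventually_elim
      case (elim n)
      have "(real n * A - 2) * ln (real n * A - 2) \<le> real (m' n) * ln (real (m' n))"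
        using elim m'_ge[of n] by (intro xlnx_mono) auto
      moreover have "real n * ln (real n) > 0" using elim by (intro mult_pos_pos) auto
      ultimately show ?case by (intro divide_right_mono) auto
    qed
    show "eventually (\<lambda>n. real (m' n) * ln (real (m' n)) / (real n * ln (real n))
            \<le> (real n * A) * ln (real n * A) / (real n * ln (real n))) sequentially"
      using evA3 evn2
    proof eventually_elim
      case (elim n)
      have "real (m' n) * ln (real (m' n)) \<le> (real n * A) * ln (real n * A)"
        using elim m'_ge[of n] m'_le[of n] by (intro xlnx_mono) auto
      moreover have "real n * ln (real n) > 0" using elim by (intro mult_pos_pos) auto
      ultimately show ?case by (intro divide_right_mono) auto
    qed
  qed
  have bA: "b \<longlonglongrightarrow> A"
  proof -
    have "(\<lambda>n. real (Vw \<omega> {1..m' n} {1..m' n} p) / (C0 * real (m' n) * ln (real (m' n)))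
              * (real (m' n) * ln (real (m' n)) / (real n * ln (real n)))) \<longlonglongrightarrow> 1 * A"
      by (rule tendsto_mult[OF f1 f2])
    moreover have "eventually (\<lambda>n. real (Vw \<omega> {1..m' n} {1..m' n} p) / (C0 * real (m' n) * ln (real (m' n)))
              * (real (m' n) * ln (real (m' n)) / (real n * ln (real n))) = b n) sequentially"
      using evA3 evn2
    proof eventually_elim
      case (elim n)
      have m'2: "real (m' n) \<ge> 2" using elim m'_ge[of n] by linarith
      then have p1: "real (m' n) * ln (real (m' n)) > 0" by (intro mult_pos_pos) auto
      have p2: "real n * ln (real n) > 0" using elim by (intro mult_pos_pos) auto
      have "m n \<ge> 1" using m'2 unfolding m'_def by simp
      then have S: "{1..<m n} = {1..m' n}" unfolding m'_def by auto
      have nz: "real (m' n) \<noteq> 0" "ln (real (m' n)) \<noteq> 0" "real n \<noteq> 0" "ln (real n) \<noteq> 0" "C0 \<noteq> 0"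
        using m'2 elim C0 by auto
      show ?case unfolding b_def N_def S using nz by (simp add: field_simps)
    qed
    ultimately show ?thesis by (simp add: tendsto_cong)
  qed
  have amb: "(\<lambda>n. a n - b n) \<longlonglongrightarrow> 1 - A" by (intro tendsto_diff a1 bA)
  have c1: "c \<longlonglongrightarrow> 1 - A"
  proof (rule order_tendstoI)
    fix y assume y: "y < 1 - A"
    define e where "e = min (1/2) (((1 - A) - y) / (2 * (1 - A)))"
    have e: "e > 0" "e < 1" unfolding e_def using y A by auto
    have ey: "(1 - e) * (1 - A) > y"
    proof -
      have "e * (1 - A) \<le> ((1 - A) - y) / 2"
        unfolding e_def using A by (simp add: min_def field_simps)
      then show ?thesis using y by (simp add: algebra_simps)
    qed
    show "eventually (\<lambda>n. y < c n) sequentially"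
      using lower_real[OF C0 A H2 e] evN
    proof eventually_elim
      case (elim n)
      have "real (Vw \<omega> {mA A n..n} {mA A n..n} p) / N n \<ge> (1 - e) * (1 - A)"
        using elim unfolding N_def by (simp add: le_divide_eq algebra_simps)
      then show ?case unfolding c_def m_def using ey by linarith
    qed
  next
    fix y assume y: "1 - A < y"
    show "eventually (\<lambda>n. c n < y) sequentially"
      using order_tendstoD(2)[OF amb y] evdec evN
    proof eventually_elim
      case (elim n)
      then show ?case using x0[of n] by linarith
    qed
  qed
  have x_lim: "x \<longlonglongrightarrow> 0"
  proof -
    have "(\<lambda>n. a n - b n - c n) \<longlonglongrightarrow> (1 - A) - (1 - A)" by (intro tendsto_diff amb c1)
    moreover have "eventually (\<lambda>n. a n - b n - c n = x n) sequentially"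
      using evdec by eventually_elim simp
    ultimately show ?thesis by (simp add: tendsto_cong)
  qed
  have concl1: "(\<lambda>n. real (Vw \<omega> {mA A n..n} {mA A n..n} p) / (C0 * real n * (1 - A) * ln (real n))) \<longlonglongrightarrow> 1"
  proof -
    have "(\<lambda>n. c n / (1 - A)) \<longlonglongrightarrow> (1 - A) / (1 - A)" using A by (intro tendsto_divide c1) auto
    moreover have "c n / (1 - A) = real (Vw \<omega> {mA A n..n} {mA A n..n} p) / (C0 * real n * (1 - A) * ln (real n))" for n
      unfolding c_def N_def m_def by (simp add: divide_divide_eq_left mult_ac)
    ultimately show ?thesis using A by simp
  qed
  define T where "T n = real (Vw \<omega> {1..mA A n} {mA A n..n} p + Vw \<omega> {mA A n..n} {1..mA A n} p)" for n
  define \<epsilon> where "\<epsilon> n = T n / (real n * ln (real n))" for n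
  have eps_lim: "\<epsilon> \<longlonglongrightarrow> 0"
  proof (rule tendsto_sandwich)
    show "eventually (\<lambda>n. 0 \<le> \<epsilon> n) sequentially"
      by (rule always_eventually) (simp add: \<epsilon>_def T_def ln_nat_nonneg)
    show "(\<lambda>n. 0) \<longlonglongrightarrow> (0::real)" by simp
    have "(\<lambda>n::nat. C0 * x n + 2 * (real n + 1) / (real n * ln (real n))) \<longlonglongrightarrow> C0 * 0 + 0"
      by (intro tendsto_add tendsto_mult tendsto_const x_lim) real_asymp
    then show "(\<lambda>n::nat. C0 * x n + 2 * (real n + 1) / (real n * ln (real n))) \<longlonglongrightarrow> 0" by simp
    show "eventually (\<lambda>n. \<epsilon> n \<le> C0 * x n + 2 * (real n + 1) / (real n * ln (real n))) sequentially"
      using evm evn2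
    proof eventually_elim
      case (elim n)
      have p2: "real n * ln (real n) > 0" using elim by (intro mult_pos_pos) auto
      have m1: "1 \<le> m n" "m n \<le> n" using elim by auto
      have cb: "Vw \<omega> {1..m n} {m n..n} p + Vw \<omega> {m n..n} {1..m n} p \<le> (Vw \<omega> {1..<m n} {m n..n} p + Vw \<omega> {m n..n} {1..<m n} p) + 2 * (n + 1)"
        by (rule cross_bound[OF m1])
      then have "real (Vw \<omega> {1..m n} {m n..n} p + Vw \<omega> {m n..n} {1..m n} p) \<le> real ((Vw \<omega> {1..<m n} {m n..n} p + Vw \<omega> {m n..n} {1..<m n} p) + 2 * (n + 1))"
        by (simp only: of_nat_le_iff)
      then have "T n \<le> real (Vw \<omega> {1..<m n} {m n..n} p + Vw \<omega> {m n..n} {1..<m n} p) + 2 * (real n + 1)"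
        unfolding T_def m_def by simp
      then have "T n / (real n * ln (real n)) \<le> (real (Vw \<omega> {1..<m n} {m n..n} p + Vw \<omega> {m n..n} {1..<m n} p) + 2 * (real n + 1)) / (real n * ln (real n))"
        using p2 by (intro divide_right_mono) auto
      also have "\<dots> = C0 * x n + 2 * (real n + 1) / (real n * ln (real n))"
      proof -
        have nz: "real n \<noteq> 0" "ln (real n) \<noteq> 0" "C0 \<noteq> 0" using elim C0 by auto
        show ?thesis unfolding x_def N_def using nz by (simp add: field_simps)
      qed
      finally show ?case unfolding \<epsilon>_def .
    qed
  qed
  have eps_eq: "T n = \<epsilon> n * real n * ln (real n)" for n
  proof (cases "real n * ln (real n) = 0")
    case False
    then show ?thesis unfolding \<epsilon>_def by (simp add: field_simps)
  next
    case True
    have "n \<le> 1"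
    proof (rule ccontr)
      assume "\<not> n \<le> 1"
      then have "real n > 1" by simp
      then have "real n * ln (real n) > 0" by (intro mult_pos_pos) auto
      then show False using True by simp
    qed
    then have "real n \<le> 1" by simp
    then have "real n * A \<le> 1 * A" using A by (intro mult_right_mono) auto
    then have "real n * A < 1" using A by linarith
    then have "real (mA A n) < 1" using mA_le[of A n] A by linarith
    then have "mA A n = 0" by simp
    then show ?thesis unfolding T_def \<epsilon>_def by simp
  qed
  show ?thesis using concl1 eps_lim eps_eq unfolding T_def by blast
qed



theorem lemma1p5:
  fixes \<mu> :: "(int \<times> int) pmf" and C0 :: real
  assumes centered1: "measure_pmf.expectation \<mu> (\<lambda>z. real_of_int (fst z)) = 0"
    and centered2: "measure_pmf.expectation \<mu> (\<lambda>z. real_of_int (snd z)) = 0"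
    and moment1: "integrable (measure_pmf \<mu>) (\<lambda>z. (real_of_int (fst z))\<^sup>2)"
    and moment2: "integrable (measure_pmf \<mu>) (\<lambda>z. (real_of_int (snd z))\<^sup>2)"
    and aperiodic: "int_group_gen (set_pmf \<mu>) = UNIV"
    and nonsingular:
      "measure_pmf.expectation \<mu> (\<lambda>z. (real_of_int (fst z))\<^sup>2)
         * measure_pmf.expectation \<mu> (\<lambda>z. (real_of_int (snd z))\<^sup>2)
       - (measure_pmf.expectation \<mu> (\<lambda>z. real_of_int (fst z) * real_of_int (snd z)))\<^sup>2 \<noteq> 0"
    and C0_pos: "C0 > 0"
    and C0_def: "(\<lambda>n. integral\<^sup>L (walk_space \<mu>) (\<lambda>\<omega>. real (self_int \<omega> n)))
                   \<sim>[at_top] (\<lambda>n. C0 * real n * ln (real n))"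
    and input_V: "AE \<omega> in walk_space \<mu>. \<forall>p.
        (\<lambda>n. real (Vw \<omega> {1..n} {1..n} p) / (C0 * real n * ln (real n))) \<longlonglongrightarrow> 1"
    and input_self: "AE \<omega> in walk_space \<mu>.
        (\<lambda>n. real (self_int \<omega> n) / (C0 * real n * ln (real n))) \<longlonglongrightarrow> 1"
  shows "\<exists>\<Omega>h \<in> sets (walk_space \<mu>). emeasure (walk_space \<mu>) \<Omega>h = 1 \<and>
    (\<forall>\<omega> \<in> \<Omega>h. \<forall>p. \<forall>A::real. 0 < A \<and> A < 1 \<longrightarrow>
      (let B = 1 - A in
        ((\<lambda>n. real (Vw \<omega> {nat \<lfloor>real n * A\<rfloor>..n} {nat \<lfloor>real n * A\<rfloor>..n} p)
              / (C0 * real n * B * ln (real n))) \<longlonglongrightarrow> 1)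
        \<and> (\<exists>\<epsilon>::nat \<Rightarrow> real. \<epsilon> \<longlonglongrightarrow> 0 \<and>
             (\<forall>n. real (Vw \<omega> {1..nat \<lfloor>real n * A\<rfloor>} {nat \<lfloor>real n * A\<rfloor>..n} p
                        + Vw \<omega> {nat \<lfloor>real n * A\<rfloor>..n} {1..nat \<lfloor>real n * A\<rfloor>} p)
                  = \<epsilon> n * real n * ln (real n)))))"
proof -
  interpret P: prob_space "walk_space \<mu>" by (rule ws_prob)
  define H2 where "H2 \<omega> p \<longleftrightarrow> (\<forall>q::rat. 0 < real_of_rat q \<and> real_of_rat q < 1 \<longrightarrow> (\<forall>k::nat.
        eventually (\<lambda>n. real (Vw \<omega> {mA (real_of_rat q) n + 1..n} {mA (real_of_rat q) n + 1..n} p)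
            \<ge> (1 - 1 / (real k + 2)) * (C0 * ((1 - real_of_rat q) * real n * ln (real n)))) sequentially))" for \<omega> p
  have inp_p: "AE \<omega> in walk_space \<mu>. (\<lambda>n. real (Vw \<omega> {1..n} {1..n} p) / (C0 * real n * ln (real n))) \<longlonglongrightarrow> 1" for p
    using input_V by eventually_elim blast
  have AE2: "AE \<omega> in walk_space \<mu>. \<forall>p. H2 \<omega> p"
  proof -
    have "AE \<omega> in walk_space \<mu>. (0 < real_of_rat q \<and> real_of_rat q < 1 \<longrightarrow>
        eventually (\<lambda>n. real (Vw \<omega> {mA (real_of_rat q) n + 1..n} {mA (real_of_rat q) n + 1..n} p)
            \<ge> (1 - 1 / (real k + 2)) * (C0 * ((1 - real_of_rat q) * real n * ln (real n)))) sequentially)"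
      for p q and k :: nat
    proof (cases "0 < real_of_rat q \<and> real_of_rat q < 1")
      case True
      have e: "1 / (real k + 2) > 0" "1 / (real k + 2) < 1" by auto
      have "AE \<omega> in walk_space \<mu>. eventually (\<lambda>n. real (Vw \<omega> {mA (real_of_rat q) n + 1..n} {mA (real_of_rat q) n + 1..n} p)
            \<ge> (1 - 1 / (real k + 2)) * (C0 * ((1 - real_of_rat q) * real n * ln (real n)))) sequentially"
        using True by (intro lower[OF C0_pos inp_p _ _ e]) auto
      then show ?thesis by eventually_elim blast
    next
      case False
      then show ?thesis by (intro AE_I2) blast
    qed
    note per = this
    have per2: "AE \<omega> in walk_space \<mu>. (0 < real_of_rat q \<and> real_of_rat q < 1 \<longrightarrow> (\<forall>k::nat.
        eventually (\<lambda>n. real (Vw \<omega> {mA (real_of_rat q) n + 1..n} {mA (real_of_rat q) n + 1..n} p)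
            \<ge> (1 - 1 / (real k + 2)) * (C0 * ((1 - real_of_rat q) * real n * ln (real n)))) sequentially))" for p q
    proof -
      have "AE \<omega> in walk_space \<mu>. \<forall>k::nat. (0 < real_of_rat q \<and> real_of_rat q < 1 \<longrightarrow>
        eventually (\<lambda>n. real (Vw \<omega> {mA (real_of_rat q) n + 1..n} {mA (real_of_rat q) n + 1..n} p)
            \<ge> (1 - 1 / (real k + 2)) * (C0 * ((1 - real_of_rat q) * real n * ln (real n)))) sequentially)"
        unfolding AE_all_countable using per by blast
      then show ?thesis by eventually_elim blast
    qed
    have "AE \<omega> in walk_space \<mu>. \<forall>p. \<forall>q::rat. (0 < real_of_rat q \<and> real_of_rat q < 1 \<longrightarrow> (\<forall>k::nat.
        eventually (\<lambda>n. real (Vw \<omega> {mA (real_of_rat q) n + 1..n} {mA (real_of_rat q) n + 1..n} p)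
            \<ge> (1 - 1 / (real k + 2)) * (C0 * ((1 - real_of_rat q) * real n * ln (real n)))) sequentially))"
      unfolding AE_all_countable using per2 by blast
    then show ?thesis unfolding H2_def .
  qed
  have AEall: "AE \<omega> in walk_space \<mu>. (\<forall>p. (\<lambda>n. real (Vw \<omega> {1..n} {1..n} p) / (C0 * real n * ln (real n))) \<longlonglongrightarrow> 1) \<and> (\<forall>p. H2 \<omega> p)"
    using input_V AE2 by eventually_elim blast
  then obtain N where N: "{\<omega> \<in> space (walk_space \<mu>). \<not> ((\<forall>p. (\<lambda>n. real (Vw \<omega> {1..n} {1..n} p) / (C0 * real n * ln (real n))) \<longlonglongrightarrow> 1) \<and> (\<forall>p. H2 \<omega> p))} \<subseteq> N"
      "emeasure (walk_space \<mu>) N = 0" "N \<in> sets (walk_space \<mu>)"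
    by (rule AE_E)
  show ?thesis
  proof (rule bexI[where x="space (walk_space \<mu>) - N"], intro conjI ballI allI impI)
    show "space (walk_space \<mu>) - N \<in> sets (walk_space \<mu>)" using N(3) by auto
    have "emeasure (walk_space \<mu>) (space (walk_space \<mu>) - N) = emeasure (walk_space \<mu>) (space (walk_space \<mu>)) - emeasure (walk_space \<mu>) N"
      using N(3) by (intro emeasure_Diff) (auto simp: P.emeasure_space_1 dest: sets.sets_into_space)
    then show "emeasure (walk_space \<mu>) (space (walk_space \<mu>) - N) = 1"
      using N(2) by (simp add: P.emeasure_space_1)
  next
    fix \<omega> p and A :: real
    assume \<omega>: "\<omega> \<in> space (walk_space \<mu>) - N" and A: "0 < A \<and> A < 1"
    then have H: "(\<forall>p. (\<lambda>n. real (Vw \<omega> {1..n} {1..n} p) / (C0 * real n * ln (real n))) \<longlonglongrightarrow> 1) \<and> (\<forall>p. H2 \<omega> p)"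
      using N(1) by auto
    have A1: "0 < A" and A2: "A < 1" using A by auto
    have "H2 \<omega> p" using H by blast
    then have H2p: "\<forall>q::rat. 0 < real_of_rat q \<and> real_of_rat q < 1 \<longrightarrow> (\<forall>k::nat.
        eventually (\<lambda>n. real (Vw \<omega> {mA (real_of_rat q) n + 1..n} {mA (real_of_rat q) n + 1..n} p)
            \<ge> (1 - 1 / (real k + 2)) * (C0 * ((1 - real_of_rat q) * real n * ln (real n)))) sequentially)"
      unfolding H2_def .
    have H1p: "(\<lambda>n. real (Vw \<omega> {1..n} {1..n} p) / (C0 * real n * ln (real n))) \<longlonglongrightarrow> 1" using H by blast
    show "let B = 1 - A in
        ((\<lambda>n. real (Vw \<omega> {nat \<lfloor>real n * A\<rfloor>..n} {nat \<lfloor>real n * A\<rfloor>..n} p)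
              / (C0 * real n * B * ln (real n))) \<longlonglongrightarrow> 1)
        \<and> (\<exists>\<epsilon>::nat \<Rightarrow> real. \<epsilon> \<longlonglongrightarrow> 0 \<and>
             (\<forall>n. real (Vw \<omega> {1..nat \<lfloor>real n * A\<rfloor>} {nat \<lfloor>real n * A\<rfloor>..n} p
                        + Vw \<omega> {nat \<lfloor>real n * A\<rfloor>..n} {1..nat \<lfloor>real n * A\<rfloor>} p)
                  = \<epsilon> n * real n * ln (real n)))"
      using det[OF C0_pos A1 A2 H1p H2p] unfolding Let_def mA_def .
  qed
qed

end
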